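(* Suppose $\frac2{n+1}<R\le1$ and let $\ell_2=\min\{n,\lfloor n/R\rfloor\}$ (so here $\ell_2=n$). Then for every bid set $B_{\mathcal D}$ of $\mathcal D$ (a multiset of $n$ nonnegative reals with sum $\beta$), $$W(\pi_{\rm unif},B_{\mathcal D})\ge f(\ell_2).$$
   Context: Position-randomized auction with two bidders $\mathcal A$ and $\mathcal D$ and $n\ge1$ objects. $\mathcal D$ has budget $\beta>0$ and $\mathcal A$ has budget $R\beta$ with $R>0$. A bidding algorithm of a bidder is a pair $(\pi,B)$: $B$ (the bid set) is a multiset of $n$ nonnegative reals whose sum is at most the bidder's budget, and $\pi$ is a randomized algorithm permuting sequences of length $n$. Applying $\pi$ to a listing of $B$ gives the final bid sequence, whose $i$-th entry is the bid on object $i$. The two bidders' permutations are independent. Each object goes to the higher bid; on a tie each bidder wins it with probability $1/2$. $w(\pi_{\mathcal A},\pi_{\mathcal D},B_{\mathcal A},B_{\mathcal D})$ is the expected number of objects won by $\mathcal A$. $W(\pi_{\mathcal D},B_{\mathcal D})$ is its supremum over all bidding algorithms $(\pi_{\mathcal A},B_{\mathcal A})$ of $\mathcal A$. $\pi_{\rm unif}$ applies a uniformly random permutation. For $x,y>0$, $\mathrm{less}(x,y)=y(\lceil x/y\rceil-1)$. For $\ell=1,\dots,n$, let $R_\ell=\mathrm{less}(R,\frac2{\ell(\ell+1)})$ and $f(\ell)=n-\ell+\frac{\ell(\ell+1)R_\ell}{2n}$. *)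

theory Defs
  imports "HOL-Probability.Probability" "HOL-Combinatorics.Permutations"
begin

text \<open>A randomized permuting algorithm: maps an input sequence to a distribution
  over output sequences, each of which is a rearrangement of the input.\<close>
type_synonym perm_alg = "real list \<Rightarrow> real list pmf"

definition valid_perm_alg :: "nat \<Rightarrow> perm_alg \<Rightarrow> bool" where
  "valid_perm_alg n \<pi> \<longleftrightarrow>
     (\<forall>xs. length xs = n \<longrightarrow> set_pmf (\<pi> xs) \<subseteq> {ys. mset ys = mset xs})"

definition valid_bid_set :: "nat \<Rightarrow> real \<Rightarrow> real multiset \<Rightarrow> bool" where
  "valid_bid_set n budget B \<longleftrightarrow>
     size B = n \<and> (\<forall>x\<in>#B. 0 \<le> x) \<and> sum_mset B \<le> budget"

definition pi_unif :: perm_alg where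
  "pi_unif xs = map_pmf (\<lambda>\<sigma>. permute_list \<sigma> xs)
                  (pmf_of_set {\<sigma>. \<sigma> permutes {..<length xs}})"

definition final_bids :: "perm_alg \<Rightarrow> real multiset \<Rightarrow> real list pmf" where
  "final_bids \<pi> B = \<pi> (sorted_list_of_multiset B)"

definition wins :: "nat \<Rightarrow> real list \<Rightarrow> real list \<Rightarrow> real" where
  "wins n a d = (\<Sum>i<n. if a ! i > d ! i then 1 else if a ! i = d ! i then 1/2 else 0)"

definition w :: "nat \<Rightarrow> perm_alg \<Rightarrow> perm_alg \<Rightarrow> real multiset \<Rightarrow> real multiset \<Rightarrow> real" where
  "w n \<pi>A \<pi>D BA BD =
     measure_pmf.expectation (pair_pmf (final_bids \<pi>A BA) (final_bids \<pi>D BD))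
       (\<lambda>(a, d). wins n a d)"

definition W :: "nat \<Rightarrow> real \<Rightarrow> real \<Rightarrow> perm_alg \<Rightarrow> real multiset \<Rightarrow> real" where
  "W n R \<beta> \<pi>D BD =
     Sup {w n \<pi>A \<pi>D BA BD | \<pi>A BA. valid_perm_alg n \<pi>A \<and> valid_bid_set n (R * \<beta>) BA}"

definition less :: "real \<Rightarrow> real \<Rightarrow> real" where
  "less x y = y * (of_int \<lceil>x / y\<rceil> - 1)"

definition R_l :: "real \<Rightarrow> nat \<Rightarrow> real" where
  "R_l R l = less R (2 / (real l * (real l + 1)))"

definition f :: "nat \<Rightarrow> real \<Rightarrow> nat \<Rightarrow> real" where
  "f n R l = real n - real l + real l * (real l + 1) * R_l R l / (2 * real n)"

end

theory Submission
  imports Defs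
begin


lemma avg_exists:
  fixes f :: "'a \<Rightarrow> real"
  assumes "finite A" "A \<noteq> {}" "(\<Sum>x\<in>A. f x) \<le> B"
  shows "\<exists>x\<in>A. real (card A) * f x \<le> B"
proof (rule ccontr)
  assume "\<not> ?thesis"
  hence h: "\<forall>x\<in>A. B / real (card A) < f x"
    using assms by (auto simp: not_le pos_divide_less_eq card_gt_0_iff mult.commute)
  have "(\<Sum>x\<in>A. B / real (card A)) < (\<Sum>x\<in>A. f x)"
    using h assms by (intro sum_strict_mono) auto
  moreover have "(\<Sum>x\<in>A. B / real (card A)) = B"
    using assms by (simp add: card_gt_0_iff)
  ultimately show False using assms by linarith
qed

lemma perm_sum:
  assumes "finite A" "g ` A \<subseteq> A" "inj_on g A"
  shows "(\<Sum>x\<in>A. ff (g x)) = (\<Sum>x\<in>A. (ff x :: real))"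
proof -
  have "g ` A = A" using endo_inj_surj assms by blast
  then show ?thesis using sum.reindex[OF assms(3), of ff] by simp
qed


context
  fixes n :: nat and d :: "nat \<Rightarrow> real"
  assumes d0: "d 0 = 0" and dmono: "\<And>i j. i \<le> j \<Longrightarrow> j \<le> n \<Longrightarrow> d i \<le> d j"
begin


lemma L_exists:
  assumes "r \<le> n"
  shows "\<exists>i\<in>{0..r}. real (r+1) * (d i + d (r - i)) \<le> 2 * (\<Sum>j\<in>{0..r}. d j)"
proof -
  have "(\<Sum>i\<in>{0..r}. d i + d (r - i)) = 2 * (\<Sum>j\<in>{0..r}. d j)"
    using sum.atLeastAtMost_rev[of d 0 r] by (simp add: sum.distrib)
  from avg_exists[of "{0..r}" "\<lambda>i. d i + d (r - i)", OF _ _ eq_refl[OF this]]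
  show ?thesis by simp
qed

lemma U_exists:
  assumes "r < n"
  shows "\<exists>i\<in>{r+1..n}. real (n-r) * (d i + d (n+1+r - i)) \<le> 2 * (\<Sum>j\<in>{r+1..n}. d j)"
proof -
  have "(\<Sum>i\<in>{r+1..n}. d i + d (n+1+r - i)) = 2 * (\<Sum>j\<in>{r+1..n}. d j)"
    using sum.atLeastAtMost_rev[of d "r+1" n] by (simp add: sum.distrib add.commute add.left_commute)
  from avg_exists[of "{r+1..n}" "\<lambda>i. d i + d (n+1+r - i)", OF _ _ eq_refl[OF this]]
  show ?thesis using assms by simp
qed


lemma triple_exists:
  assumes n: "n = 2*a+1"
  shows "\<exists>x\<in>{1..n}. real n * (d x + d (if x \<le> a+1 then x + a else x - a - 1)
            + d (if x \<le> a+1 then 2*a+3-2*x else 4*a+4-2*x)) \<le> 3 * (\<Sum>j\<in>{1..n}. d j)"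
proof -
  define y where "y = (\<lambda>x::nat. if x \<le> a+1 then x + a else x - a - 1)"
  define z where "z = (\<lambda>x::nat. if x \<le> a+1 then 2*a+3-2*x else 4*a+4-2*x)"
  have y1: "y ` {1..n} \<subseteq> {1..n}" unfolding y_def n by auto
  have y2: "inj_on y {1..n}" unfolding y_def n inj_on_def by auto
  have z1: "z ` {1..n} \<subseteq> {1..n}" unfolding z_def n by auto
  have z2: "inj_on z {1..n}" unfolding z_def n inj_on_def by (auto, presburger+)
  have "(\<Sum>x\<in>{1..n}. d x + d (y x) + d (z x)) = 3 * (\<Sum>j\<in>{1..n}. d j)"
    using perm_sum[OF _ y1 y2, of d] perm_sum[OF _ z1 z2, of d] by (simp add: sum.distrib)
  from avg_exists[of "{1..n}" "\<lambda>x. d x + d (y x) + d (z x)", OF _ _ eq_refl[OF this]]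
  show ?thesis using n unfolding y_def z_def by simp
qed


lemma rep_facts:
  "sum_list (concat (replicate a xs)) = a * sum_list xs"
  "sum_list (map d (concat (replicate a xs))) = real a * sum_list (map d xs)"
  "length (concat (replicate a xs)) = a * length xs"
  "set (concat (replicate a xs)) \<subseteq> set xs"
  by (induct a) (auto simp: algebra_simps)

lemma CC:
  assumes n1: "n \<ge> 1" and r: "r \<le> n" and ar: "a \<ge> 1 \<or> r = n"
  shows "\<exists>xs. set xs \<subseteq> {0..n} \<and> length xs \<le> 2*a + (if r \<le> 1 then 1 else 2)
     \<and> a*(n+1)+r \<le> sum_list xs
     \<and> sum_list (map d xs) \<le> real (a*(n+1)+r) * (2 * (\<Sum>j\<in>{1..n}. d j) / (real n * (real n + 1)))"
proof -
  define \<beta> where "\<beta> = (\<Sum>j\<in>{1..n}. d j)"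
  define Dr where "Dr = (\<Sum>j\<in>{0..r}. d j)"
  define K where "K = real (a*(n+1)+r) * (2 * \<beta> / (real n * (real n + 1)))"
  have b0: "(\<Sum>j\<in>{0..n}. d j) = \<beta>"
  proof -
    have "{0..n} = insert 0 {1..n}" by auto
    then show ?thesis unfolding \<beta>_def using d0 by simp
  qed
  have split: "Dr + (\<Sum>j\<in>{r+1..n}. d j) = \<beta>"
  proof -
    have "{0..n} = {0..r} \<union> {r+1..n}" using r by auto
    moreover have "{0..r} \<inter> {r+1..n} = {}" by auto
    ultimately have "(\<Sum>j\<in>{0..n}. d j) = Dr + (\<Sum>j\<in>{r+1..n}. d j)"
      unfolding Dr_def by (simp add: sum.union_disjoint)
    then show ?thesis using b0 by simp
  qed
  obtain j where j: "j \<in> {1..n}" "real n * (d j + d (n+1-j)) \<le> 2 * \<beta>"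
    using U_exists[of 0] n1 unfolding \<beta>_def by auto
  define pj where "pj = [j, n+1-j]"
  define \<pi> where "\<pi> = d j + d (n+1-j)"
  have pj: "set pj \<subseteq> {0..n}" "sum_list pj = n+1" "length pj = 2" "sum_list (map d pj) = \<pi>"
    using j unfolding pj_def \<pi>_def by auto
  have pi: "real n * \<pi> \<le> 2 * \<beta>" using j unfolding \<pi>_def by simp
  obtain lm where lm: "set lm \<subseteq> {0..n}" "length lm \<le> (if r \<le> 1 then 1 else 2)"
     "sum_list lm = r" "real (r+1) * sum_list (map d lm) \<le> 2 * Dr"
  proof (cases "r \<le> 1")
    case True
    have "real (r+1) * d r \<le> 2 * Dr"
    proof (cases "r = 0")
      case True then show ?thesis unfolding Dr_def using d0 by simp
    next
      case False
      with \<open>r \<le> 1\<close> have "r = 1" by simp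
      then show ?thesis unfolding Dr_def using d0 by simp
    qed
    then show ?thesis using that[of "[r]"] True r by simp
  next
    case False
    obtain i where i: "i \<in> {0..r}" "real (r+1) * (d i + d (r - i)) \<le> 2 * Dr"
      using L_exists[OF r] unfolding Dr_def by auto
    show ?thesis using that[of "[i, r-i]"] i False r by auto
  qed
  define ell where "ell = sum_list (map d lm)"
  define O1 where "O1 = concat (replicate a pj) @ lm"
  have O1: "set O1 \<subseteq> {0..n}" "length O1 \<le> 2*a + (if r \<le> 1 then 1 else 2)"
     "sum_list O1 = a*(n+1)+r" "sum_list (map d O1) = real a * \<pi> + ell"
    using rep_facts[of a pj] pj lm unfolding O1_def ell_def by auto
  show ?thesis
  proof (cases "r = n")
    case True
    have "Dr = \<beta>" using split True by simp
    have l: "real (n+1) * ell \<le> 2 * \<beta>" using lm(4) True \<open>Dr = \<beta>\<close> unfolding ell_def by simp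
    have "real a * \<pi> \<le> real a * (2 * \<beta> / real n)"
      using pi n1 by (intro mult_left_mono) (auto simp: field_simps)
    moreover have "ell \<le> 2 * \<beta> / (real n + 1)" using l by (simp add: field_simps)
    moreover have "real a * (2 * \<beta> / real n) + 2 * \<beta> / (real n + 1) = K"
      unfolding K_def True using n1 by (simp add: field_simps)
    ultimately have "sum_list (map d O1) \<le> K" using O1(4) by linarith
    then show ?thesis using O1 unfolding K_def \<beta>_def by (intro exI[of _ O1]) auto
  next
    case False
    with r have rn: "r < n" by simp
    with ar have a1: "a \<ge> 1" by simp
    obtain i where i: "i \<in> {r+1..n}" "real (n-r) * (d i + d (n+1+r - i)) \<le> 2 * (\<Sum>j\<in>{r+1..n}. d j)"
      using U_exists[OF rn] by auto
    define u where "u = d i + d (n+1+r - i)"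
    define O2 where "O2 = concat (replicate (a-1) pj) @ [i, n+1+r-i]"
    have O2: "set O2 \<subseteq> {0..n}" "length O2 \<le> 2*a + (if r \<le> 1 then 1 else 2)"
       "sum_list O2 = a*(n+1)+r" "sum_list (map d O2) = real (a-1) * \<pi> + u"
    proof -
      show "set O2 \<subseteq> {0..n}" using rep_facts(4)[of "a-1" pj] pj i unfolding O2_def by auto
      show "length O2 \<le> 2*a + (if r \<le> 1 then 1 else 2)"
        using rep_facts(3)[of "a-1" pj] pj a1 unfolding O2_def by auto
      have "(a-1)*(n+1) + (i + (n+1+r-i)) = a*(n+1)+r" using i a1
        by (cases a) (auto simp: algebra_simps)
      then show "sum_list O2 = a*(n+1)+r"
        using rep_facts(1)[of "a-1" pj] pj unfolding O2_def by simp
      show "sum_list (map d O2) = real (a-1) * \<pi> + u"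
        using rep_facts(2)[of "a-1" pj] pj unfolding O2_def u_def by simp
    qed
    have uu: "real (n-r) * u \<le> 2 * (\<beta> - Dr)" using i split unfolding u_def by simp
    have ll: "real (r+1) * ell \<le> 2 * Dr" using lm(4) unfolding ell_def by simp
    have "real a * \<pi> + ell \<le> K \<or> real (a-1) * \<pi> + u \<le> K"
    proof (rule ccontr)
      assume "\<not> ?thesis"
      hence c1: "K < real a * \<pi> + ell" and c2: "K < real (a-1) * \<pi> + u" by auto
      define A where "A = real a"
      define N where "N = real n"
      define Q where "Q = real r"
      have am1: "real (a-1) = A - 1" using a1 unfolding A_def by (simp add: of_nat_diff)
      have nmr: "real (n-r) = N - Q" using rn unfolding N_def Q_def by (simp add: of_nat_diff)
      have QN: "Q < N" using rn unfolding N_def Q_def by simp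
      have Q0: "0 \<le> Q" unfolding Q_def by simp
      have A1: "1 \<le> A" using a1 unfolding A_def by simp
      have N1: "1 \<le> N" using n1 unfolding N_def by simp
      have "(Q+1) * K < (Q+1) * (A * \<pi> + ell)"
        using c1 Q0 unfolding A_def by (intro mult_strict_left_mono) auto
      moreover have "(N-Q) * K < (N-Q) * ((A-1) * \<pi> + u)"
        using c2 QN am1 by (intro mult_strict_left_mono) auto
      ultimately have "(N+1) * K < ((N+1)*A - N + Q) * \<pi> + ((Q+1) * ell + (N-Q) * u)"
        by (simp add: algebra_simps)
      moreover have "(Q+1) * ell + (N-Q) * u \<le> 2 * \<beta>"
        using ll uu nmr unfolding Q_def by (simp add: algebra_simps)
      moreover have "((N+1)*A - N + Q) * \<pi> \<le> ((N+1)*A - N + Q) * (2 * \<beta> / N)"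
      proof (rule mult_left_mono)
        show "\<pi> \<le> 2 * \<beta> / N" using pi N1 unfolding N_def by (simp add: field_simps)
        have "(N+1)*1 \<le> (N+1)*A" using A1 N1 by (intro mult_left_mono) auto
        then show "0 \<le> (N+1)*A - N + Q" using Q0 by simp
      qed
      moreover have "((N+1)*A - N + Q) * (2 * \<beta> / N) + 2 * \<beta> = (N+1) * K"
      proof -
        have K_eq: "K = (A*(N+1) + Q) * (2 * \<beta> / (N * (N+1)))"
          unfolding K_def A_def N_def Q_def by (simp add: algebra_simps)
        have Np: "N > 0" using N1 by simp
        have fr: "(N+1) / (N*(N+1)) = 1 / N" using Np by (simp add: divide_simps)
        have "(N+1) * K = (A*(N+1) + Q) * (2 * \<beta>) * ((N+1) / (N*(N+1)))"
          unfolding K_eq by (simp only: times_divide_eq_right times_divide_eq_left mult.commute mult.left_commute)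
        also have "\<dots> = (A*(N+1) + Q) * (2 * \<beta> / N)" unfolding fr by simp
        finally have "(N+1) * K = (A*(N+1) + Q) * (2 * \<beta> / N)" .
        also have "\<dots> = ((N+1)*A - N + Q) * (2 * \<beta> / N) + 2 * \<beta>"
          using Np by (simp add: field_simps)
        finally show ?thesis by simp
      qed
      ultimately show False by linarith
    qed
    then show ?thesis
    proof
      assume "real a * \<pi> + ell \<le> K"
      then show ?thesis using O1 unfolding K_def \<beta>_def by (intro exI[of _ O1]) auto
    next
      assume "real (a-1) * \<pi> + u \<le> K"
      then show ?thesis using O2 unfolding K_def \<beta>_def by (intro exI[of _ O2]) auto
    qed
  qed
qed


lemma comb_main:
  assumes n2: "n \<ge> 2" and k1: "n \<le> k" and k2: "2*(k+1) \<le> n*(n+1)"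
  shows "\<exists>xs. set xs \<subseteq> {0..n} \<and> length xs \<le> n \<and> k \<le> sum_list xs
     \<and> sum_list (map d xs) \<le> real k * (2 * (\<Sum>j\<in>{1..n}. d j) / (real n * (real n + 1)))"
proof -
  define \<beta> where "\<beta> = (\<Sum>j\<in>{1..n}. d j)"
  define c where "c = 2 * \<beta> / (real n * (real n + 1))"
  define a where "a = k div (n+1)"
  define r where "r = k mod (n+1)"
  have kar: "k = a*(n+1) + r" unfolding a_def r_def by (metis div_mult_mod_eq)
  have rn: "r \<le> n" unfolding r_def
    using pos_mod_bound[of "n+1" k] by (simp add: less_Suc_eq_le)
  have ar: "a \<ge> 1 \<or> r = n"
  proof (cases "a = 0")
    case True then have "k = r" using kar by simp
    then show ?thesis using k1 rn by simp
  qed simp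
  have "2*a*(n+1) < n*(n+1)" using k2 kar by (simp add: algebra_simps)
  hence a2: "2*a < n" by (metis mult_less_cancel2)
  show ?thesis
  proof (cases "r \<le> 1 \<or> 2*a+2 \<le> n")
    case True
    from CC[of r a] n2 rn ar obtain xs where xs: "set xs \<subseteq> {0..n}"
      "length xs \<le> 2*a + (if r \<le> 1 then 1 else 2)" "a*(n+1)+r \<le> sum_list xs"
      "sum_list (map d xs) \<le> real (a*(n+1)+r) * (2 * (\<Sum>j\<in>{1..n}. d j) / (real n * (real n + 1)))"
      by auto
    have "length xs \<le> n" using xs(2) True a2 by (auto split: if_splits)
    then show ?thesis using xs kar by (intro exI[of _ xs]) auto
  next
    case False
    hence r2: "r \<ge> 2" and na: "n = 2*a+1" using a2 by auto
    have "2*(a*(2*a+2) + r + 1) \<le> (2*a+1)*(2*a+2)" using k2 kar na by simp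
    hence ra: "r \<le> a" by (simp add: algebra_simps)
    with r2 have a2': "a \<ge> 2" by simp
    obtain x where x: "x \<in> {1..n}" "real n * (d x + d (if x \<le> a+1 then x + a else x - a - 1)
            + d (if x \<le> a+1 then 2*a+3-2*x else 4*a+4-2*x)) \<le> 3 * \<beta>"
      using triple_exists[OF na] unfolding \<beta>_def by auto
    define tr where "tr = [x, if x \<le> a+1 then x + a else x - a - 1, if x \<le> a+1 then 2*a+3-2*x else 4*a+4-2*x]"
    have tr: "set tr \<subseteq> {0..n}" "length tr = 3" "sum_list tr = 3*(a+1)"
      "real n * sum_list (map d tr) \<le> 3 * \<beta>"
      using x na unfolding tr_def by (auto simp: add.assoc)
    have ar': "a-2 \<ge> 1 \<or> a+1+r = n" using ra r2 na by auto
    from CC[of "a+1+r" "a-2"] n2 ra na ar' obtain xs where xs: "set xs \<subseteq> {0..n}"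
      "length xs \<le> 2*(a-2) + (if a+1+r \<le> 1 then 1 else 2)" "(a-2)*(n+1)+(a+1+r) \<le> sum_list xs"
      "sum_list (map d xs) \<le> real ((a-2)*(n+1)+(a+1+r)) * c"
      unfolding c_def \<beta>_def by auto
    define ys where "ys = xs @ tr"
    have "length ys \<le> n" using xs(2) tr(2) na a2' unfolding ys_def by auto
    moreover have "(a-2)*(n+1)+(a+1+r) + 3*(a+1) = k"
      using kar na a2' by (cases a; cases "a - 1"; simp add: algebra_simps)
    hence "k \<le> sum_list ys" using xs(3) tr(3) unfolding ys_def by simp
    moreover have "sum_list (map d ys) \<le> real k * c"
    proof -
      have "sum_list (map d tr) \<le> 3 * \<beta> / real n" using tr(4) n2 by (simp add: field_simps)
      also have "3 * \<beta> / real n = real (3*(a+1)) * c"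
      proof -
        have e1: "real n + 1 = 2*(real a + 1)" using na by simp
        have p1: "real a + 1 > 0" by simp
        have p2: "real n > 0" using n2 by simp
        have "c = (2 * \<beta>) / (2 * (real n * (real a + 1)))" unfolding c_def e1
          by (simp add: ac_simps)
        also have "\<dots> = \<beta> / (real n * (real a + 1))"
          by (rule mult_divide_mult_cancel_left) simp
        finally have cc: "c = \<beta> / (real n * (real a + 1))" .
        have "real (3*(a+1)) * c = ((real a + 1) * (3 * \<beta>)) / ((real a + 1) * real n)"
          unfolding cc by (simp add: ac_simps)
        also have "\<dots> = 3 * \<beta> / real n"
          by (rule mult_divide_mult_cancel_left) (use p1 in simp)
        finally show ?thesis by simp
      qed
      finally have "sum_list (map d ys) \<le> real ((a-2)*(n+1)+(a+1+r)) * c + real (3*(a+1)) * c"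
        using xs(4) unfolding ys_def by simp
      also have "\<dots> = real k * c"
        using \<open>(a-2)*(n+1)+(a+1+r) + 3*(a+1) = k\<close>[symmetric] by (simp add: algebra_simps)
      finally show ?thesis .
    qed
    moreover have "set ys \<subseteq> {0..n}" using xs(1) tr(1) unfolding ys_def by auto
    ultimately show ?thesis unfolding c_def \<beta>_def by blast
  qed
qed

end


definition cmpf :: "real \<Rightarrow> real \<Rightarrow> real" where
  "cmpf x y = (if x > y then 1 else if x = y then 1/2 else 0)"

lemma count_perm_eq:
  assumes fin: "finite S" and i: "i \<in> S" and t: "t \<in> S"
  shows "card {\<sigma>. \<sigma> permutes S \<and> \<sigma> i = t} = card {\<sigma>. \<sigma> permutes S \<and> \<sigma> i = i}"
proof -
  let ?f = "\<lambda>\<sigma>. Transposition.transpose i t \<circ> \<sigma>"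
  have "bij_betw ?f {\<sigma>. \<sigma> permutes S \<and> \<sigma> i = i} {\<sigma>. \<sigma> permutes S \<and> \<sigma> i = t}"
  proof (rule bij_betw_byWitness[where f' = ?f])
    show "\<forall>a\<in>{\<sigma>. \<sigma> permutes S \<and> \<sigma> i = i}. ?f (?f a) = a"
      by (auto simp: fun_eq_iff)
    show "\<forall>a\<in>{\<sigma>. \<sigma> permutes S \<and> \<sigma> i = t}. ?f (?f a) = a"
      by (auto simp: fun_eq_iff)
    have tp: "Transposition.transpose i t permutes S" using permutes_swap_id[OF i t] .
    show "?f ` {\<sigma>. \<sigma> permutes S \<and> \<sigma> i = i} \<subseteq> {\<sigma>. \<sigma> permutes S \<and> \<sigma> i = t}"
    proof (rule image_subsetI)
      fix \<sigma> assume "\<sigma> \<in> {\<sigma>. \<sigma> permutes S \<and> \<sigma> i = i}"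
      then have s1: "\<sigma> permutes S" and s2: "\<sigma> i = i" by auto
      have "?f \<sigma> permutes S" using permutes_compose[OF s1 tp] .
      moreover have "?f \<sigma> i = t" using s2 by simp
      ultimately show "?f \<sigma> \<in> {\<sigma>. \<sigma> permutes S \<and> \<sigma> i = t}" by simp
    qed
    show "?f ` {\<sigma>. \<sigma> permutes S \<and> \<sigma> i = t} \<subseteq> {\<sigma>. \<sigma> permutes S \<and> \<sigma> i = i}"
    proof (rule image_subsetI)
      fix \<sigma> assume "\<sigma> \<in> {\<sigma>. \<sigma> permutes S \<and> \<sigma> i = t}"
      then have s1: "\<sigma> permutes S" and s2: "\<sigma> i = t" by auto
      have "?f \<sigma> permutes S" using permutes_compose[OF s1 tp] .
      moreover have "?f \<sigma> i = i" using s2 by simp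
      ultimately show "?f \<sigma> \<in> {\<sigma>. \<sigma> permutes S \<and> \<sigma> i = i}" by simp
    qed
  qed
  then show ?thesis by (simp add: bij_betw_same_card)
qed

lemma sum_perm_pos:
  fixes h :: "'a \<Rightarrow> real"
  assumes fin: "finite S" and i: "i \<in> S"
  shows "(\<Sum>\<sigma>\<in>{\<sigma>. \<sigma> permutes S}. h (\<sigma> i))
       = real (card {\<sigma>. \<sigma> permutes S \<and> \<sigma> i = i}) * (\<Sum>t\<in>S. h t)"
proof -
  let ?P = "{\<sigma>. \<sigma> permutes S}"
  have finP: "finite ?P" using finite_permutations[OF fin] by simp
  have "(\<Sum>\<sigma>\<in>?P. h (\<sigma> i)) = (\<Sum>\<sigma>\<in>?P. \<Sum>t\<in>S. if t = \<sigma> i then h t else 0)"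
  proof (rule sum.cong[OF refl])
    fix \<sigma> assume sp: "\<sigma> \<in> ?P"
    have "\<sigma> i \<in> S" using permutes_in_image[of \<sigma> S i] i sp by simp
    then show "h (\<sigma> i) = (\<Sum>t\<in>S. if t = \<sigma> i then h t else 0)"
      using sum.delta[OF fin, of "\<sigma> i" h] by simp
  qed
  also have "\<dots> = (\<Sum>t\<in>S. \<Sum>\<sigma>\<in>?P. if t = \<sigma> i then h t else 0)" by (rule sum.swap)
  also have "\<dots> = (\<Sum>t\<in>S. real (card {\<sigma>. \<sigma> permutes S \<and> \<sigma> i = i}) * h t)"
  proof (rule sum.cong[OF refl])
    fix t assume tS: "t \<in> S"
    have "(\<Sum>\<sigma>\<in>?P. if t = \<sigma> i then h t else 0) = (\<Sum>\<sigma>\<in>{\<sigma>\<in>?P. t = \<sigma> i}. h t)"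
      using sum.inter_filter[OF finP, of "\<lambda>_. h t" "\<lambda>\<sigma>. t = \<sigma> i"] by (rule sym)
    also have "{\<sigma>\<in>?P. t = \<sigma> i} = {\<sigma>. \<sigma> permutes S \<and> \<sigma> i = t}" by auto
    also have "(\<Sum>\<sigma>\<in>{\<sigma>. \<sigma> permutes S \<and> \<sigma> i = t}. h t) = real (card {\<sigma>. \<sigma> permutes S \<and> \<sigma> i = t}) * h t"
      by (rule sum_constant)
    also have "card {\<sigma>. \<sigma> permutes S \<and> \<sigma> i = t} = card {\<sigma>. \<sigma> permutes S \<and> \<sigma> i = i}"
      by (rule count_perm_eq[OF fin i tS])
    finally show "(\<Sum>\<sigma>\<in>?P. if t = \<sigma> i then h t else 0) = real (card {\<sigma>. \<sigma> permutes S \<and> \<sigma> i = i}) * h t" .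
  qed
  finally show ?thesis by (simp add: sum_distrib_left)
qed


lemma avg_perm:
  fixes h :: "'a \<Rightarrow> real"
  assumes fin: "finite S" and i: "i \<in> S"
  shows "(\<Sum>\<sigma>\<in>{\<sigma>. \<sigma> permutes S}. h (\<sigma> i)) / real (card {\<sigma>. \<sigma> permutes S})
       = (\<Sum>t\<in>S. h t) / real (card S)"
proof -
  define c where "c = real (card {\<sigma>. \<sigma> permutes S \<and> \<sigma> i = i})"
  have cP: "real (card {\<sigma>. \<sigma> permutes S}) = c * real (card S)"
    using sum_perm_pos[OF fin i, of "\<lambda>_. 1"] unfolding c_def by simp
  have "c > 0"
  proof -
    have "id \<in> {\<sigma>. \<sigma> permutes S \<and> \<sigma> i = i}" by (simp add: permutes_id)
    moreover have "finite {\<sigma>. \<sigma> permutes S \<and> \<sigma> i = i}"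
      using finite_permutations[OF fin] by (rule finite_subset[rotated]) auto
    ultimately show ?thesis unfolding c_def by (metis (no_types, lifting) card_gt_0_iff empty_iff of_nat_0_less_iff)
  qed
  moreover have "card S > 0" using fin i by (auto simp: card_gt_0_iff)
  ultimately show ?thesis using sum_perm_pos[OF fin i, of h] cP unfolding c_def[symmetric]
    by (simp add: field_simps)
qed

lemma w_formula:
  assumes n1: "n \<ge> 1" and BA: "size BA = n" and BD: "size BD = n"
  shows "w n (\<lambda>xs. return_pmf xs) pi_unif BA BD =
    (\<Sum>i<n. \<Sum>t<n. cmpf (sorted_list_of_multiset BA ! i) (sorted_list_of_multiset BD ! t)) / real n"
proof -
  define as where "as = sorted_list_of_multiset BA"
  define L where "L = sorted_list_of_multiset BD"
  define P where "P = {\<sigma>. \<sigma> permutes {..<n}}"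
  have lenL: "length L = n" unfolding L_def using BD
    by (metis mset_sorted_list_of_multiset size_mset)
  have finP: "finite P" unfolding P_def using finite_permutations[of "{..<n}"] by simp
  have neP: "P \<noteq> {}" unfolding P_def using permutes_id by blast
  have "w n (\<lambda>xs. return_pmf xs) pi_unif BA BD
      = measure_pmf.expectation (pmf_of_set P) (\<lambda>\<sigma>. wins n as (permute_list \<sigma> L))"
    unfolding w_def final_bids_def pi_unif_def as_def[symmetric] L_def[symmetric] lenL P_def
    by (simp add: pair_return_pmf1)
  also have "\<dots> = (\<Sum>\<sigma>\<in>P. wins n as (permute_list \<sigma> L)) / real (card P)"
    by (rule integral_pmf_of_set[OF neP finP])
  also have "(\<Sum>\<sigma>\<in>P. wins n as (permute_list \<sigma> L)) = (\<Sum>\<sigma>\<in>P. \<Sum>i<n. cmpf (as ! i) (L ! (\<sigma> i)))"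
  proof (rule sum.cong[OF refl])
    fix \<sigma> assume "\<sigma> \<in> P"
    hence sp: "\<sigma> permutes {..<length L}" unfolding P_def lenL by simp
    show "wins n as (permute_list \<sigma> L) = (\<Sum>i<n. cmpf (as ! i) (L ! (\<sigma> i)))"
      unfolding wins_def cmpf_def
      by (rule sum.cong[OF refl]) (use permute_list_nth[OF sp] lenL in auto)
  qed
  also have "\<dots> = (\<Sum>i<n. \<Sum>\<sigma>\<in>P. cmpf (as ! i) (L ! (\<sigma> i)))" by (rule sum.swap)
  also have "\<dots> / real (card P) = (\<Sum>i<n. (\<Sum>\<sigma>\<in>P. cmpf (as ! i) (L ! (\<sigma> i))) / real (card P))"
    by (simp add: sum_divide_distrib)
  also have "\<dots> = (\<Sum>i<n. (\<Sum>t<n. cmpf (as ! i) (L ! t)) / real n)"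
  proof (rule sum.cong[OF refl])
    fix i assume "i \<in> {..<n}"
    then show "(\<Sum>\<sigma>\<in>P. cmpf (as ! i) (L ! (\<sigma> i))) / real (card P) = (\<Sum>t<n. cmpf (as ! i) (L ! t)) / real n"
      using avg_perm[of "{..<n}" i "\<lambda>t. cmpf (as ! i) (L ! t)"] unfolding P_def by simp
  qed
  also have "\<dots> = (\<Sum>i<n. \<Sum>t<n. cmpf (as ! i) (L ! t)) / real n"
    by (simp add: sum_divide_distrib)
  finally show ?thesis unfolding as_def L_def .
qed


lemma G_lower:
  fixes L :: "real list" and b :: real
  assumes srt: "sorted L" and lenL: "length L = n" and x: "x \<le> n"
    and b: "x > 0 \<Longrightarrow> L ! (x - 1) < b"
  shows "real x \<le> (\<Sum>t<n. cmpf b (L ! t))"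
proof -
  have nn: "\<And>t. 0 \<le> cmpf b (L ! t)" unfolding cmpf_def by auto
  have "(\<Sum>t<x. cmpf b (L ! t)) \<le> (\<Sum>t<n. cmpf b (L ! t))"
    using x nn by (intro sum_mono2) auto
  moreover have "(\<Sum>t<x. cmpf b (L ! t)) = (\<Sum>t<x. 1)"
  proof (rule sum.cong[OF refl])
    fix t assume t: "t \<in> {..<x}"
    have "L ! t \<le> L ! (x - 1)" using t x lenL srt by (intro sorted_nth_mono) auto
    with b t have "L ! t < b" by fastforce
    then show "cmpf b (L ! t) = 1" unfolding cmpf_def by simp
  qed
  ultimately show ?thesis by simp
qed

lemma sum_nth_list: "(\<Sum>i<length xs. g (xs ! i)) = sum_list (map g xs)"
proof -
  have "sum_list (map g xs) = (\<Sum>i = 0..<length (map g xs). map g xs ! i)"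
    by (rule sum_list_sum_nth)
  then show ?thesis by (simp add: lessThan_atLeast0)
qed

theorem lemma6:
  fixes n :: nat and R \<beta> :: real and BD :: "real multiset"
  assumes "n \<ge> 1" and "\<beta> > 0"
    and "2 / (real n + 1) < R" and "R \<le> 1"
    and "size BD = n" and "\<forall>x\<in>#BD. 0 \<le> x" and "sum_mset BD = \<beta>"
  shows "W n R \<beta> pi_unif BD \<ge> f n R (min n (nat \<lfloor>real n / R\<rfloor>))"
proof -
  note n1 = assms(1) and bpos = assms(2) and Rlo = assms(3) and Rhi = assms(4)
    and sizeBD = assms(5) and BDnn = assms(6) and sumBD = assms(7)
  have "0 < 2 / (real n + 1)" by simp
  hence Rpos: "R > 0" using Rlo by linarith
  have n2: "n \<ge> 2"
  proof (rule ccontr)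
    assume "\<not> n \<ge> 2" with n1 have "n = 1" by simp
    then show False using Rlo Rhi by simp
  qed
  define L where "L = sorted_list_of_multiset BD"
  have lenL: "length L = n" unfolding L_def using sizeBD
    by (metis mset_sorted_list_of_multiset size_mset)
  have srt: "sorted L" unfolding L_def by simp
  have Lnn: "\<And>t. t < n \<Longrightarrow> 0 \<le> L ! t"
    using BDnn lenL unfolding L_def
    by (metis nth_mem set_sorted_list_of_multiset)
  have sumL: "sum_list L = \<beta>" unfolding L_def using sumBD
    by (metis mset_sorted_list_of_multiset sum_mset_sum_list)
  define d where "d = (\<lambda>j::nat. if j = 0 then 0 else L ! (j - 1))"
  have d0: "d 0 = 0" unfolding d_def by simp
  have dmono: "\<And>i j. i \<le> j \<Longrightarrow> j \<le> n \<Longrightarrow> d i \<le> d j"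
  proof -
    fix i j :: nat assume ij: "i \<le> j" "j \<le> n"
    show "d i \<le> d j"
    proof (cases "i = 0")
      case True
      then show ?thesis unfolding d_def using Lnn ij by auto
    next
      case False
      then show ?thesis unfolding d_def using ij srt lenL by (auto intro: sorted_nth_mono)
    qed
  qed
  have dnn: "\<And>j. j \<le> n \<Longrightarrow> 0 \<le> d j" using dmono[of 0] d0 by fastforce
  have sumd: "(\<Sum>j\<in>{1..n}. d j) = \<beta>"
  proof -
    have "(\<Sum>j\<in>{1..n}. d j) = (\<Sum>t<n. L ! t)"
    proof -
      have "(\<Sum>j\<in>{1..n}. d j) = (\<Sum>t\<in>{0..<n}. d (Suc t))"
        by (metis One_nat_def atLeastLessThanSuc_atLeastAtMost sum.shift_bounds_Suc_ivl)
      also have "\<dots> = (\<Sum>t<n. L ! t)" unfolding d_def by (simp add: lessThan_atLeast0)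
      finally show ?thesis .
    qed
    also have "\<dots> = sum_list L" using sum_nth_list[of "\<lambda>x. x" L] lenL by simp
    finally show ?thesis using sumL by simp
  qed
  define X where "X = R * (real n * (real n + 1)) / 2"
  define k where "k = nat (\<lceil>X\<rceil> - 1)"
  have Xn: "X > real n"
  proof -
    have "2 < R * (real n + 1)" using Rlo by (simp add: field_simps)
    hence "2 * real n < R * (real n + 1) * real n" using n1
      by (intro mult_strict_right_mono) auto
    then show ?thesis unfolding X_def by (simp add: algebra_simps)
  qed
  have XT: "X \<le> real n * (real n + 1) / 2"
  proof -
    have "R * (real n * (real n + 1)) \<le> 1 * (real n * (real n + 1))"
      using Rhi by (intro mult_right_mono) auto
    then show ?thesis unfolding X_def by simp
  qed
  have ceil1: "\<lceil>X\<rceil> \<ge> int n + 1"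
  proof -
    have "real_of_int \<lceil>X\<rceil> > real n" using Xn le_of_int_ceiling[of X] by linarith
    hence "int n < \<lceil>X\<rceil>" by (metis of_int_less_iff of_int_of_nat_eq)
    then show ?thesis by simp
  qed
  have kr: "real k = real_of_int \<lceil>X\<rceil> - 1" unfolding k_def using ceil1 by simp
  have k1: "n \<le> k" unfolding k_def using ceil1 by linarith
  have kX: "real k < X" using kr ceiling_less_iff[of X] by linarith
  have k2: "2*(k+1) \<le> n*(n+1)"
  proof -
    have ev: "2 dvd n*(n+1)" by simp
    have "real (n*(n+1) div 2) = real (n*(n+1)) / 2" using real_of_nat_div[OF ev] by simp
    hence eq: "real n * (real n + 1) / 2 = real (n*(n+1) div 2)" by (simp add: algebra_simps)
    have "X \<le> real (n*(n+1) div 2)" using XT unfolding eq .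
    hence "\<lceil>X\<rceil> \<le> int (n*(n+1) div 2)" by (simp add: ceiling_le_iff)
    hence "k + 1 \<le> n*(n+1) div 2" unfolding k_def using ceil1 by linarith
    hence "2 * (k + 1) \<le> 2 * (n*(n+1) div 2)" by (rule mult_le_mono2)
    also have "2 * (n*(n+1) div 2) = n*(n+1)" using ev by (rule dvd_mult_div_cancel)
    finally show ?thesis .
  qed
  define c where "c = 2 * \<beta> / (real n * (real n + 1))"
  obtain xs where xs: "set xs \<subseteq> {0..n}" "length xs \<le> n" "k \<le> sum_list xs"
    "sum_list (map d xs) \<le> real k * c"
    using comb_main[where n=n and d=d and k=k, OF d0 dmono n2 k1 k2] unfolding sumd c_def by blast
  have kcR: "real k * c < R * \<beta>"
  proof -
    have "real k * c = real k * \<beta> / (real n * (real n + 1) / 2)" unfolding c_def by simp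
    also have "\<dots> < X * \<beta> / (real n * (real n + 1) / 2)"
      using kX bpos n1 by (intro divide_strict_right_mono mult_strict_right_mono) auto
    also have "\<dots> = R * \<beta>"
    proof -
      define M where "M = real n * (real n + 1)"
      have Mp: "M > 0" unfolding M_def using n1 by simp
      have "X = R * M / 2" unfolding X_def M_def ..
      then show ?thesis unfolding M_def[symmetric] using Mp by (simp add: field_simps)
    qed
    finally show ?thesis .
  qed
  define \<epsilon> where "\<epsilon> = (R * \<beta> - real k * c) / real n"
  have epos: "\<epsilon> > 0" unfolding \<epsilon>_def using kcR n1 by simp
  define bids where "bids = map (\<lambda>x. d x + \<epsilon>) xs @ replicate (n - length xs) 0"
  define BA where "BA = mset bids"
  have lenb: "length bids = n" unfolding bids_def using xs(2) by simp
  have validBA: "valid_bid_set n (R * \<beta>) BA"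
  proof -
    have "size BA = n" unfolding BA_def using lenb by simp
    moreover have "\<forall>x\<in>#BA. 0 \<le> x" unfolding BA_def bids_def using xs(1) dnn epos
      by (auto intro: add_nonneg_nonneg less_imp_le)
    moreover have "sum_mset BA \<le> R * \<beta>"
    proof -
      have "sum_mset BA = sum_list (map d xs) + real (length xs) * \<epsilon>"
        unfolding BA_def bids_def sum_mset_sum_list by (simp add: sum_list_addf sum_list_triv sum_list_replicate)
      also have "\<dots> \<le> real k * c + real n * \<epsilon>"
        using xs(2,4) epos by (intro add_mono mult_right_mono) auto
      also have "\<dots> = R * \<beta>" unfolding \<epsilon>_def using n1 by simp
      finally show ?thesis .
    qed
    ultimately show ?thesis unfolding valid_bid_set_def by blast
  qed
  have validpi: "valid_perm_alg n (\<lambda>xs. return_pmf xs)" unfolding valid_perm_alg_def by simp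
  define G where "G = (\<lambda>b. \<Sum>t<n. cmpf b (L ! t))"
  have Gnn: "\<And>b. 0 \<le> G b" unfolding G_def cmpf_def by (auto intro: sum_nonneg)
  have sizeBA: "size BA = n" unfolding BA_def using lenb by simp
  have wval: "w n (\<lambda>xs. return_pmf xs) pi_unif BA BD = sum_list (map G bids) / real n"
  proof -
    have "w n (\<lambda>xs. return_pmf xs) pi_unif BA BD =
      (\<Sum>i<n. G (sorted_list_of_multiset BA ! i)) / real n"
      unfolding w_formula[OF n1 sizeBA sizeBD] G_def L_def ..
    also have "(\<Sum>i<n. G (sorted_list_of_multiset BA ! i)) = sum_list (map G (sorted_list_of_multiset BA))"
    proof -
      have "length (sorted_list_of_multiset BA) = n" using sizeBA
        by (metis mset_sorted_list_of_multiset size_mset)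
      then show ?thesis using sum_nth_list[of G "sorted_list_of_multiset BA"] by simp
    qed
    also have "\<dots> = sum_list (map G bids)"
      by (metis BA_def mset_map mset_sorted_list_of_multiset sum_mset_sum_list)
    finally show ?thesis .
  qed
  have wlow: "real k / real n \<le> w n (\<lambda>xs. return_pmf xs) pi_unif BA BD"
  proof -
    have "real k \<le> real (sum_list xs)" using xs(3) by simp
    also have "\<dots> = sum_list (map real xs)" by (simp add: sum_list_of_nat)
    also have "\<dots> \<le> sum_list (map (\<lambda>x. G (d x + \<epsilon>)) xs)"
    proof (rule sum_list_mono)
      fix x assume "x \<in> set xs"
      hence xn: "x \<le> n" using xs(1) by auto
      show "real x \<le> G (d x + \<epsilon>)" unfolding G_def
      proof (rule G_lower[OF srt lenL xn])
        assume "x > 0"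
        then show "L ! (x - 1) < d x + \<epsilon>" unfolding d_def using epos by simp
      qed
    qed
    also have "\<dots> \<le> sum_list (map G bids)"
      unfolding bids_def using Gnn by (simp add: sum_list_replicate o_def)
    finally have "real k \<le> sum_list (map G bids)" .
    then show ?thesis unfolding wval using n1 by (simp add: divide_right_mono)
  qed
  have fval: "f n R (min n (nat \<lfloor>real n / R\<rfloor>)) = real k / real n"
  proof -
    have "R * real n \<le> 1 * real n" using Rhi by (intro mult_right_mono) auto
    hence "real n \<le> real n / R" using Rpos by (simp add: field_simps)
    hence "n \<le> nat \<lfloor>real n / R\<rfloor>" by (metis floor_mono floor_of_nat nat_int nat_mono)
    hence mn: "min n (nat \<lfloor>real n / R\<rfloor>) = n" by simp
    have X2: "R / (2 / (real n * (real n + 1))) = X" unfolding X_def by simp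
    define M where "M = real n * (real n + 1)"
    have Mp: "M > 0" unfolding M_def using n1 by simp
    have "f n R n = M * ((2 / M) * (real_of_int \<lceil>X\<rceil> - 1)) / (2 * real n)"
      unfolding f_def R_l_def less_def X2 M_def by simp
    also have "\<dots> = real k / real n" unfolding kr[symmetric] using n1 Mp by (simp add: field_simps)
    finally show ?thesis unfolding mn .
  qed
  define S where "S = {w n \<pi>A pi_unif BA BD | \<pi>A BA. valid_perm_alg n \<pi>A \<and> valid_bid_set n (R * \<beta>) BA}"
  have inS: "w n (\<lambda>xs. return_pmf xs) pi_unif BA BD \<in> S" unfolding S_def using validpi validBA by blast
  have bdd: "bdd_above S"
  proof (rule bdd_aboveI)
    fix y assume "y \<in> S"
    then obtain \<pi>A BA' where y: "y = w n \<pi>A pi_unif BA' BD" unfolding S_def by blast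
    have wb: "\<And>a dd. wins n a dd \<le> real n"
    proof -
      fix a dd
      have "wins n a dd \<le> (\<Sum>i<n. (1::real))" unfolding wins_def by (intro sum_mono) auto
      then show "wins n a dd \<le> real n" by simp
    qed
    have wb2: "\<And>a dd. \<bar>wins n a dd\<bar> \<le> real n"
    proof -
      fix a dd
      have "0 \<le> wins n a dd" unfolding wins_def by (intro sum_nonneg) auto
      then show "\<bar>wins n a dd\<bar> \<le> real n" using wb[of a dd] by simp
    qed
    let ?M = "pair_pmf (final_bids \<pi>A BA') (final_bids pi_unif BD)"
    have int: "integrable (measure_pmf ?M) (\<lambda>(a, dd). wins n a dd)"
      by (rule measure_pmf.integrable_const_bound[where B = "real n"]) (use wb2 in auto)
    have "measure_pmf.expectation ?M (\<lambda>(a, dd). wins n a dd) \<le> real n"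
      by (rule measure_pmf.integral_le_const[OF int]) (use wb in auto)
    then show "y \<le> real n" unfolding y w_def .
  qed
  have "W n R \<beta> pi_unif BD = Sup S" unfolding W_def S_def ..
  moreover have "w n (\<lambda>xs. return_pmf xs) pi_unif BA BD \<le> Sup S" by (rule cSup_upper[OF inS bdd])
  ultimately show ?thesis using wlow fval by simp
qed

end
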